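(* Let $q$ be an odd prime power and let $f:\mathbb{F}_q\to\mathbb{F}_q$, $f(x)=x^2$, viewed as a function on the additive group of the finite field $\mathbb{F}_q$. Then $\mathrm{pres}(f)\le \lceil 2\sqrt{q-1}\rceil-1$.
   Context: For a function $g:\mathbb{F}_q\to\mathbb{F}_q$, $V(g)=\#\{g(x):x\in\mathbb{F}_q\}$. The permutation resemblance of $f$ is $\mathrm{pres}(f)=\min\{V(g): g:\mathbb{F}_q\to\mathbb{F}_q,\ x\mapsto g(x)+f(x) \text{ is a bijection of } \mathbb{F}_q\}$. *)

theory Defs
  imports "HOL-Analysis.Analysis"
begin

definition V :: "('a::finite \<Rightarrow> 'a) \<Rightarrow> nat" where
  "V g = card (range g)"

definition pres :: "('a::{finite, ab_group_add} \<Rightarrow> 'a) \<Rightarrow> nat" where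
  "pres f = (LEAST n. \<exists>g :: 'a \<Rightarrow> 'a. bij (\<lambda>x. g x + f x) \<and> V g = n)"

end

theory Submission
  imports Defs "HOL-Number_Theory.Residues"
begin

lemma card_filter_sum: "finite A \<Longrightarrow> card {x\<in>A. P x} = (\<Sum>x\<in>A. if P x then 1 else (0::nat))"
  by (simp add: sum.If_cases Collect_conj_eq)

lemma shift_card:
  fixes C :: "'a::ab_group_add set"
  shows "card {d. j + d \<in> C} = card C"
proof -
  have "{d. j + d \<in> C} = (\<lambda>c. c - j) ` C"
  proof (rule Set.set_eqI)
    fix d
    show "(d \<in> {d. j + d \<in> C}) = (d \<in> (\<lambda>c. c - j) ` C)"
    proof
      assume "d \<in> {d. j + d \<in> C}"
      then show "d \<in> (\<lambda>c. c - j) ` C" by (intro image_eqI[of _ _ "j + d"]) auto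
    next
      assume "d \<in> (\<lambda>c. c - j) ` C"
      then show "d \<in> {d. j + d \<in> C}" by auto
    qed
  qed
  also have "card \<dots> = card C"
    by (rule card_image) (auto simp: inj_on_def)
  finally show ?thesis .
qed

lemma count_shift:
  fixes J C :: "'a::{finite,ab_group_add} set"
  assumes "J \<inter> C = {}" "CARD('a) \<ge> 2"
  shows "\<exists>d. card J * card C \<le> (CARD('a) - 1) * card {j\<in>J. j + d \<in> C}"
proof (rule ccontr)
  assume H: "\<not> ?thesis"
  let ?c = "\<lambda>d. card {j\<in>J. j + d \<in> C}"
  let ?A = "UNIV - {0::'a}"
  have c0: "?c 0 = 0" using assms(1) by auto
  have "(\<Sum>d\<in>UNIV. ?c d) = (\<Sum>d\<in>UNIV. \<Sum>j\<in>J. if j + d \<in> C then 1 else (0::nat))"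
    by (intro sum.cong refl card_filter_sum) simp
  also have "\<dots> = (\<Sum>j\<in>J. \<Sum>d\<in>UNIV. if j + d \<in> C then 1 else (0::nat))"
    by (rule sum.swap)
  also have "\<dots> = (\<Sum>j\<in>J. card C)"
  proof (rule sum.cong)
    fix j assume "j \<in> J"
    have "(\<Sum>d\<in>UNIV. if j + d \<in> C then 1 else (0::nat)) = card {d. j + d \<in> C}"
      by (simp add: sum.If_cases)
    also have "\<dots> = card C" by (rule shift_card)
    finally show "(\<Sum>d\<in>UNIV. if j + d \<in> C then 1 else (0::nat)) = card C" .
  qed simp
  finally have S: "(\<Sum>d\<in>UNIV. ?c d) = card J * card C" by simp
  have "(\<Sum>d\<in>UNIV. ?c d) = ?c 0 + (\<Sum>d\<in>?A. ?c d)"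
    by (rule sum.remove) auto
  hence S2: "(\<Sum>d\<in>?A. ?c d) = card J * card C" using S c0 by simp
  have cA: "card ?A = CARD('a) - 1" by (simp add: card_Diff_singleton)
  have cpos: "0 < card ?A" using cA assms(2) by simp
  have Ane: "?A \<noteq> {}" using cpos card_gt_0_iff by blast
  have "(CARD('a) - 1) * (\<Sum>d\<in>?A. ?c d) = (\<Sum>d\<in>?A. (CARD('a) - 1) * ?c d)"
    by (simp add: sum_distrib_left)
  also have "\<dots> < (\<Sum>d\<in>?A. card J * card C)"
    by (rule sum_strict_mono) (use H Ane in \<open>auto simp: not_le\<close>)
  also have "\<dots> = (CARD('a) - 1) * (card J * card C)" using cA by simp
  finally show False using S2 by simp
qed

lemma arith_step:
  fixes r m k N :: nat
  assumes "r * r \<le> N * m" "r * k \<le> N" "1 \<le> k" "m \<le> r" "1 \<le> N"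
  shows "(r - m) * (k + 1) \<le> N"
proof -
  obtain e where e: "N = r * k + e" using assms(2) le_Suc_ex by blast
  define r' where "r' = r - m"
  have rr: "r = r' + m" using assms(4) r'_def by simp
  have A: "N * r' + r * r \<le> r * N" using assms(1) rr by (simp add: algebra_simps)
  have B: "r * (N - r) * (k + 1) \<le> N * N"
  proof -
    have "int (r * (N - r) * (k + 1)) \<le> int (N * N)"
    proof (cases "r \<le> N")
      case True
      have i1: "int (r * (N - r) * (k + 1)) = int r * (int N - int r) * (int k + 1)"
        using True by (simp only: of_nat_mult of_nat_diff[OF True] of_nat_add of_nat_1)
      have i2: "int N * int N - int r * (int N - int r) * (int k + 1) = int r * int r + int r * int e * (int k - 1) + int e * int e"
        unfolding e of_nat_add of_nat_mult by (simp add: algebra_simps)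
      have "int (N * N) - int (r * (N - r) * (k + 1)) = int r * int r + int r * int e * (int k - 1) + int e * int e"
        using i1 i2 by simp
      moreover have "0 \<le> int r * int e * (int k - 1)" using assms(3) by simp
      moreover have "0 \<le> int r * int r" "0 \<le> int e * int e" by simp_all
      ultimately show ?thesis by linarith
    next
      case False then show ?thesis by simp
    qed
    thus ?thesis by linarith
  qed
  have "N * r' \<le> r * (N - r)" using A by (simp add: diff_mult_distrib2)
  hence "N * r' * (k + 1) \<le> r * (N - r) * (k + 1)" by (rule mult_right_mono) simp_all
  hence "N * r' * (k + 1) \<le> N * N" using B by (rule order_trans)
  hence "N * (r' * (k + 1)) \<le> N * N" by (simp only: mult.assoc)
  hence "0 < N \<longrightarrow> r' * (k + 1) \<le> N" by (rule mult_le_cancel1[THEN iffD1])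
  hence "r' * (k + 1) \<le> N" using assms(5) by simp
  thus ?thesis by (simp add: r'_def)
qed

lemma matching:
  fixes J C :: "'a::{finite,ab_group_add} set"
  assumes "J \<inter> C = {}" "card J = card C" "card J * k \<le> CARD('a) - 1" "1 \<le> k" "k \<le> u"
    "CARD('a) \<ge> 2"
  shows "\<exists>h. bij_betw (\<lambda>j. j + h j) J C \<and> card (h ` J) + k \<le> u + (CARD('a) - 1) div u"
  using assms
proof (induction "u - k" arbitrary: k J C)
  case 0
  then have ku: "k = u" by simp
  obtain \<phi> where phi: "bij_betw \<phi> J C"
    using finite_same_card_bij[OF finite finite 0(3)] by blast
  have "bij_betw (\<lambda>j. j + (\<phi> j - j)) J C" using phi by simp
  moreover have "card ((\<lambda>j. \<phi> j - j) ` J) \<le> card J" by (rule card_image_le) simp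
  moreover have "card J \<le> (CARD('a) - 1) div u"
  proof -
    have "card J = card J * u div u" using 0 ku by simp
    also have "\<dots> \<le> (CARD('a) - 1) div u" using 0 ku by (intro div_le_mono) simp
    finally show ?thesis .
  qed
  ultimately show ?case using ku by (intro exI[of _ "\<lambda>j. \<phi> j - j"]) auto
next
  case (Suc i)
  let ?N = "CARD('a) - 1"
  define r where "r = card J"
  show ?case
  proof (cases "r = 0")
    case True
    then have "J = {}" "C = {}" using Suc.prems r_def by auto
    then show ?thesis using Suc.prems(5) by (intro exI[of _ id]) (simp add: bij_betw_def)
  next
    case False
    obtain d where d: "card J * card C \<le> ?N * card {j\<in>J. j + d \<in> C}"
      using count_shift[OF Suc.prems(1) Suc.prems(6)] by blast
    define M where "M = {j\<in>J. j + d \<in> C}"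
    define J' where "J' = J - M"
    define C' where "C' = C - (\<lambda>j. j + d) ` M"
    have MJ: "M \<subseteq> J" and MC: "(\<lambda>j. j + d) ` M \<subseteq> C" by (auto simp: M_def)
    have injd: "inj_on (\<lambda>j. j + d) M" by (auto simp: inj_on_def)
    have cJ': "card J' = r - card M" unfolding J'_def r_def
      by (rule card_Diff_subset) (use MJ in auto)
    have cC': "card C' = r - card M" unfolding C'_def r_def Suc.prems(2)
      using card_Diff_subset[OF _ MC] card_image[OF injd] by (metis finite)
    have mr: "card M \<le> r" unfolding r_def by (rule card_mono) (use MJ in auto)
    have ar: "(r - card M) * (k + 1) \<le> ?N"
      by (rule arith_step) (use d Suc.prems r_def M_def mr in auto)
    have disj: "J' \<inter> C' = {}" using Suc.prems(1) by (auto simp: J'_def C'_def)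
    obtain h' where h': "bij_betw (\<lambda>j. j + h' j) J' C'"
      "card (h' ` J') + (k + 1) \<le> u + ?N div u"
    proof -
      have ik: "i = u - (k + 1)" and ku': "k + 1 \<le> u" using Suc.hyps(2) by arith+
      have cJC': "card J' = card C'" using cJ' cC' by simp
      have ar': "card J' * (k + 1) \<le> ?N" using ar cJ' by simp
      have "\<exists>h. bij_betw (\<lambda>j. j + h j) J' C' \<and> card (h ` J') + (k + 1) \<le> u + ?N div u"
        by (rule Suc.hyps(1)[OF ik disj cJC' ar' _ ku' Suc.prems(6)]) simp
      then show ?thesis using that by blast
    qed
    define h where "h = (\<lambda>j. if j \<in> M then d else h' j)"
    have b1: "bij_betw (\<lambda>j. j + h j) M ((\<lambda>j. j + d) ` M)"
      unfolding bij_betw_def using injd by (auto simp: h_def inj_on_def)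
    have b2: "bij_betw (\<lambda>j. j + h j) J' C'"
      by (rule bij_betw_cong[THEN iffD2, OF _ h'(1)]) (auto simp: h_def J'_def)
    have b: "bij_betw (\<lambda>j. j + h j) (M \<union> J') ((\<lambda>j. j + d) ` M \<union> C')"
      by (rule bij_betw_combine[OF b1 b2]) (auto simp: C'_def)
    have "M \<union> J' = J" using MJ J'_def by auto
    moreover have "(\<lambda>j. j + d) ` M \<union> C' = C" using MC C'_def by auto
    ultimately have bJ: "bij_betw (\<lambda>j. j + h j) J C" using b by simp
    have "h ` J \<subseteq> insert d (h' ` J')" by (auto simp: h_def J'_def)
    hence "card (h ` J) \<le> card (insert d (h' ` J'))" by (intro card_mono) auto
    also have "\<dots> \<le> Suc (card (h' ` J'))" by (rule card_insert_le_m1) auto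
    finally show ?thesis using bJ h'(2) by (intro exI[of _ h]) auto
  qed
qed

lemma numeric:
  fixes N :: nat
  assumes "N \<ge> 2"
  shows "nat \<lceil>sqrt (real N)\<rceil> + N div nat \<lceil>sqrt (real N)\<rceil> \<le> nat \<lceil>2 * sqrt (real N)\<rceil>"
    and "2 \<le> nat \<lceil>sqrt (real N)\<rceil>"
proof -
  define s where "s = sqrt (real N)"
  define u where "u = nat \<lceil>s\<rceil>"
  define c where "c = nat \<lceil>2 * s\<rceil>"
  have s1: "s > 1" using assms by (simp add: s_def)
  have ss: "s * s = real N" using s_def by simp
  have us: "s \<le> real u" "real u < s + 1" using s1 by (auto simp: u_def) linarith+
  have cs: "2 * s \<le> real c" by (simp add: c_def) linarith
  show "2 \<le> nat \<lceil>sqrt (real N)\<rceil>"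
  proof -
    have "1 < real u" using us s1 by linarith
    thus ?thesis unfolding u_def s_def by linarith
  qed
  have upos: "u > 0" using us s1 by simp
  have uc: "u \<le> c" using us cs s1 by linarith
  have "real N < real u * (real c - real u + 1)"
  proof -
    define e where "e = real u - s"
    have e0: "0 \<le> e" "e < 1" using us by (auto simp: e_def)
    have "real u * (2 * s - real u + 1) = s * s + s + e - e * e"
      by (simp add: e_def algebra_simps)
    moreover have "e * e \<le> e" using e0 by (intro mult_right_le_one_le) auto
    moreover have "real u * (2 * s - real u + 1) \<le> real u * (real c - real u + 1)"
      using cs by (intro mult_left_mono) auto
    ultimately show ?thesis using ss s1 by linarith
  qed
  moreover have "real (u * (c - u + 1)) = real u * (real c - real u + 1)"
    by (simp only: of_nat_mult of_nat_add of_nat_diff[OF uc] of_nat_1)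
  ultimately have "real N < real (u * (c - u + 1))" by simp
  hence "N < u * (c - u + 1)" by (simp only: of_nat_less_iff)
  hence "N div u < c - u + 1" using upos by (simp add: div_less_iff_less_mult mult.commute)
  thus "nat \<lceil>sqrt (real N)\<rceil> + N div nat \<lceil>sqrt (real N)\<rceil> \<le> nat \<lceil>2 * sqrt (real N)\<rceil>"
    using uc unfolding u_def c_def s_def by linarith
qed

lemma two_ne_zero_odd:
  assumes "odd CARD('a::{field,finite})"
  shows "(2::'a) \<noteq> 0"
proof
  assume h: "(2::'a) = 0"
  have "of_nat 2 = (0::'a)" using h by simp
  hence d2: "CHAR('a) dvd 2" by (simp only: of_nat_eq_0_iff_char_dvd)
  have "CHAR('a) \<noteq> 1"
  proof
    assume "CHAR('a) = 1"
    hence "of_nat 1 = (0::'a)" using of_nat_eq_0_iff_char_dvd by (metis dvd_refl)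
    thus False by simp
  qed
  moreover have "CHAR('a) \<le> 2" using d2 by (rule dvd_imp_le) simp
  moreover have "CHAR('a) \<noteq> 0" using d2 \<open>CHAR('a) \<noteq> 1\<close> by (metis CHAR_dvd_CARD dvd_0_left_iff card_eq_0_iff finite UNIV_not_empty)
  ultimately have "CHAR('a) = 2" by linarith
  hence "2 dvd CARD('a)" using CHAR_dvd_CARD by metis
  with assms show False by simp
qed

theorem corollary5p1:
  fixes f :: "'a::{field, finite} \<Rightarrow> 'a"
  assumes "odd CARD('a)"
    and "\<And>x. f x = x ^ 2"
  shows "pres f \<le> nat (\<lceil>2 * sqrt (real (CARD('a) - 1))\<rceil>) - 1"
proof -
  let ?q = "CARD('a)"
  let ?N = "?q - 1"
  have two: "(2::'a) \<noteq> 0" by (rule two_ne_zero_odd[OF assms(1)])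
  have neg: "x = 0" if "x = - x" for x :: 'a
  proof -
    have "2 * x = 0" using that by (metis mult_2 add.right_inverse)
    thus ?thesis using two by simp
  qed
  have sq: "y = x \<or> y = - x" if "x ^ 2 = y ^ 2" for x y :: 'a
  proof -
    have "(y - x) * (y + x) = 0" using that by (simp add: algebra_simps power2_eq_square)
    thus ?thesis by (auto simp: eq_neg_iff_add_eq_0)
  qed
  have q2: "?q \<ge> 2"
  proof -
    have "card {0::'a, 1} = 2" by simp
    moreover have "card {0::'a, 1} \<le> ?q" by (rule card_mono) auto
    ultimately show ?thesis by simp
  qed
  obtain \<nu> :: "'a \<Rightarrow> nat" where inu: "inj \<nu>"
    using finite_imp_inj_to_nat_seg[of "UNIV :: 'a set"] by auto
  define X0 where "X0 = {x. \<nu> x \<le> \<nu> (- x)}"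
  define R where "R = {x. \<nu> (- x) < \<nu> x}"
  define I where "I = range (\<lambda>x::'a. x ^ 2)"
  define J where "J = I - {0}"
  define C where "C = UNIV - I"
  have XR: "X0 \<union> R = UNIV" "X0 \<inter> R = {}" by (auto simp: X0_def R_def)
  have nu_eq: "\<nu> x = \<nu> y \<Longrightarrow> x = y" for x y using inu by (simp add: inj_eq)
  have inj0: "inj_on (\<lambda>x. x ^ 2) X0"
  proof (rule inj_onI)
    fix x y assume xy: "x \<in> X0" "y \<in> X0" "x ^ 2 = y ^ 2"
    show "x = y"
    proof (cases "y = x")
      case False
      then have "y = - x" using sq[OF xy(3)] by blast
      then have "\<nu> x = \<nu> (- x)" using xy(1,2) by (auto simp: X0_def)
      then have "x = - x" by (rule nu_eq)
      then have "x = 0" by (rule neg)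
      then show ?thesis using \<open>y = - x\<close> by simp
    qed simp
  qed
  have img0: "(\<lambda>x. x ^ 2) ` X0 = I"
  proof
    show "(\<lambda>x. x ^ 2) ` X0 \<subseteq> I" by (auto simp: I_def)
    show "I \<subseteq> (\<lambda>x. x ^ 2) ` X0"
    proof
      fix y assume "y \<in> I"
      then obtain x where y: "y = x ^ 2" by (auto simp: I_def)
      show "y \<in> (\<lambda>x. x ^ 2) ` X0"
      proof (cases "x \<in> X0")
        case True then show ?thesis using y by auto
      next
        case False
        then have "- x \<in> X0" by (auto simp: X0_def)
        moreover have "y = (- x) ^ 2" using y by simp
        ultimately show ?thesis by blast
      qed
    qed
  qed
  have R0: "x \<noteq> 0" if "x \<in> R" for x using that by (auto simp: R_def)
  have injR: "inj_on (\<lambda>x. x ^ 2) R"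
  proof (rule inj_onI)
    fix x y assume xy: "x \<in> R" "y \<in> R" "x ^ 2 = y ^ 2"
    show "x = y"
    proof (rule ccontr)
      assume "x \<noteq> y"
      then have "y = - x" using sq[OF xy(3)] by blast
      then show False using xy(1,2) by (auto simp: R_def)
    qed
  qed
  have imgR: "(\<lambda>x. x ^ 2) ` R = J"
  proof
    show "(\<lambda>x. x ^ 2) ` R \<subseteq> J" using R0 by (auto simp: J_def I_def)
    show "J \<subseteq> (\<lambda>x. x ^ 2) ` R"
    proof
      fix y assume "y \<in> J"
      then obtain x where y: "y = x ^ 2" and x0: "x \<noteq> 0" by (auto simp: J_def I_def)
      have "x \<noteq> - x" using neg x0 by blast
      then have "\<nu> x \<noteq> \<nu> (- x)" using inu by (auto simp: inj_eq)
      show "y \<in> (\<lambda>x. x ^ 2) ` R"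
      proof (cases "x \<in> R")
        case True then show ?thesis using y by auto
      next
        case False
        then have "- x \<in> R" using \<open>\<nu> x \<noteq> \<nu> (- x)\<close> by (auto simp: R_def)
        moreover have "y = (- x) ^ 2" using y by simp
        ultimately show ?thesis by blast
      qed
    qed
  qed
  have cX0: "card X0 = card I" using card_image[OF inj0] img0 by simp
  have cR: "card R = card J" using card_image[OF injR] imgR by simp
  have I0: "0 \<in> I" by (auto simp: I_def)
  have cJ: "card J = card I - 1" unfolding J_def using I0 by (simp add: card_Diff_singleton)
  have "card X0 + card R = ?q" using XR card_Un_disjoint[of X0 R] by simp
  moreover have "card I > 0" using I0 card_gt_0_iff finite by blast
  ultimately have qI: "?q = 2 * card I - 1" using cX0 cR cJ by simp
  have cC: "card J = card C"
  proof -
    have "card C = ?q - card I" unfolding C_def by (rule card_Diff_subset) auto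
    thus ?thesis using qI cJ by simp
  qed
  have JC: "J \<inter> C = {}" by (auto simp: J_def C_def)
  have N2: "?N \<ge> 2" using q2 assms(1) qI by presburger
  have cJN: "card J * 2 \<le> ?N" using qI cJ by simp
  define u where "u = nat \<lceil>sqrt (real ?N)\<rceil>"
  have u2: "2 \<le> u" and un: "u + ?N div u \<le> nat \<lceil>2 * sqrt (real ?N)\<rceil>"
    using numeric[OF N2] by (simp_all add: u_def)
  obtain h where hb: "bij_betw (\<lambda>j. j + h j) J C" and hc: "card (h ` J) + 2 \<le> u + ?N div u"
    using matching[OF JC cC cJN _ u2 q2] by auto
  define g where "g = (\<lambda>x. if x \<in> X0 then 0 else h (x ^ 2))"
  have fx: "f = (\<lambda>x. x ^ 2)" using assms(2) by auto
  have bX: "bij_betw (\<lambda>x. g x + f x) X0 I"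
  proof (rule bij_betw_cong[THEN iffD2])
    show "bij_betw (\<lambda>x. x ^ 2) X0 I" using inj0 img0 by (simp add: bij_betw_def)
  qed (simp add: g_def fx)
  have bR: "bij_betw (\<lambda>x. g x + f x) R C"
  proof (rule bij_betw_cong[THEN iffD2])
    have "bij_betw (\<lambda>x. x ^ 2) R J" using injR imgR by (simp add: bij_betw_def)
    from bij_betw_trans[OF this hb]
    show "bij_betw ((\<lambda>j. j + h j) \<circ> (\<lambda>x. x ^ 2)) R C" .
  next
    fix x assume "x \<in> R"
    then have "x \<notin> X0" using XR by auto
    then show "g x + f x = ((\<lambda>j. j + h j) \<circ> (\<lambda>x. x ^ 2)) x"
      by (simp add: g_def fx add.commute)
  qed
  have "bij_betw (\<lambda>x. g x + f x) (X0 \<union> R) (I \<union> C)"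
    by (rule bij_betw_combine[OF bX bR]) (auto simp: C_def)
  moreover have "I \<union> C = UNIV" by (auto simp: C_def)
  ultimately have bg: "bij (\<lambda>x. g x + f x)" using XR by simp
  have "range g \<subseteq> insert 0 (h ` J)"
  proof
    fix y assume "y \<in> range g"
    then obtain x where y: "y = g x" by auto
    show "y \<in> insert 0 (h ` J)"
    proof (cases "x \<in> X0")
      case True then show ?thesis using y by (simp add: g_def)
    next
      case False
      then have "x \<in> R" using XR by auto
      then have "x ^ 2 \<in> J" using imgR by auto
      then show ?thesis using y False by (simp add: g_def)
    qed
  qed
  hence "card (range g) \<le> card (insert 0 (h ` J))" by (intro card_mono) auto
  also have "\<dots> \<le> Suc (card (h ` J))" by (rule card_insert_le_m1) auto
  finally have Vg: "V g \<le> Suc (card (h ` J))" by (simp add: V_def)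
  have "pres f \<le> V g"
    unfolding pres_def by (rule Least_le) (use bg in blast)
  also have "\<dots> \<le> nat \<lceil>2 * sqrt (real ?N)\<rceil> - 1" using Vg hc un by linarith
  finally show ?thesis .
qed

end
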